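(* Let $S$ be a polynomial ring over a field $k$, let $x$ be a variable of $S$, and let $R = S/(x)$, identified with the polynomial ring in the remaining variables. Let $I$ be a squarefree monomial ideal in $S$ and let $xF_1, \ldots, xF_n$ be the minimal monomial generators of $I$ divisible by $x$. Let $H = (I:x)/I$, regarded as an $R$-module, with generators the images of $F_1,\dots,F_n$. Let $N$ be the block diagonal matrix whose $i$-th block is the row matrix consisting of the minimal monomial generators of $I:F_i$ (over $R$), and let $P$ be the matrix whose columns are the minimal syzygies of the ideal $(F_1,\ldots,F_n)$ of $R$. Then the block matrix $M = (N \mid P)$ is a presentation matrix for $H$ (with respect to the surjection $R^n \to H$ sending the $i$-th basis vector to the class of $F_i$).
   Context: A presentation matrix for an $R$-module $H$ with respect to a surjection $R^n \to H$ is a matrix whose columns generate the kernel of that surjection. *)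

theory Defs
  imports "HOL-Library.Poly_Mapping"
begin

text \<open>Polynomial ring k[variables 'v]: polynomials are finitely supported maps from
monomials (exponent vectors 'v =>0 nat) to coefficients in k.\<close>

type_synonym ('v, 'k) mpoly = "('v \<Rightarrow>\<^sub>0 nat) \<Rightarrow>\<^sub>0 'k"

definition mono :: "('v \<Rightarrow>\<^sub>0 nat) \<Rightarrow> ('v, 'k::field) mpoly" where
  "mono m = Poly_Mapping.single m 1"

definition mdvd :: "('v \<Rightarrow>\<^sub>0 nat) \<Rightarrow> ('v \<Rightarrow>\<^sub>0 nat) \<Rightarrow> bool" where
  "mdvd m m' \<longleftrightarrow> (\<forall>v. Poly_Mapping.lookup m v \<le> Poly_Mapping.lookup m' v)"

definition sqfree_mono :: "('v \<Rightarrow>\<^sub>0 nat) \<Rightarrow> bool" where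
  "sqfree_mono m \<longleftrightarrow> (\<forall>v. Poly_Mapping.lookup m v \<le> 1)"

definition gen_ideal :: "'a::comm_ring_1 set \<Rightarrow> 'a set" where
  "gen_ideal A = {\<Sum>a\<in>F. c a * a | F c. finite F \<and> F \<subseteq> A}"

definition colon :: "'a::comm_ring_1 set \<Rightarrow> 'a \<Rightarrow> 'a set" where
  "colon I f = {p. p * f \<in> I}"

definition monos_in :: "('v, 'k::field) mpoly set \<Rightarrow> ('v \<Rightarrow>\<^sub>0 nat) set" where
  "monos_in A = {m. mono m \<in> A}"

definition mingens :: "('v, 'k::field) mpoly set \<Rightarrow> ('v \<Rightarrow>\<^sub>0 nat) set" where
  "mingens A = {m \<in> monos_in A. \<forall>m'\<in>monos_in A. mdvd m' m \<longrightarrow> m' = m}"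

definition squarefree_monomial_ideal :: "('v, 'k::field) mpoly set \<Rightarrow> bool" where
  "squarefree_monomial_ideal I \<longleftrightarrow>
     (\<exists>G. finite G \<and> (\<forall>m\<in>G. sqfree_mono m) \<and> I = gen_ideal (mono ` G))"

text \<open>R = S/(x) identified with the subring of polynomials not involving x\<close>
definition subring_without :: "'v \<Rightarrow> ('v, 'k::field) mpoly set" where
  "subring_without x = {p. \<forall>m \<in> Poly_Mapping.keys p. Poly_Mapping.lookup m x = 0}"

text \<open>free module R^n: vectors nat => S with entries in R, zero beyond n\<close>
definition freemod :: "('v, 'k::field) mpoly set \<Rightarrow> nat \<Rightarrow> (nat \<Rightarrow> ('v, 'k) mpoly) set" where
  "freemod R n = {r. (\<forall>i<n. r i \<in> R) \<and> (\<forall>i\<ge>n. r i = 0)}"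

definition rspan :: "'a::comm_ring_1 set \<Rightarrow> (nat \<Rightarrow> 'a) set \<Rightarrow> (nat \<Rightarrow> 'a) set" where
  "rspan R C = {(\<lambda>i. \<Sum>c\<in>F. a c * c i) | F a. finite F \<and> F \<subseteq> C \<and> (\<forall>c\<in>F. a c \<in> R)}"

text \<open>the surjection R^n -> H = (I:x)/I, e_i |-> class of F_i, represented by a lift to S\<close>
definition lincomb :: "nat \<Rightarrow> (nat \<Rightarrow> 'a::comm_ring_1) \<Rightarrow> (nat \<Rightarrow> 'a) \<Rightarrow> 'a" where
  "lincomb n f r = (\<Sum>i<n. r i * f i)"

end

theory Submission
  imports Defs
begin


lemma gi_zero: "0 \<in> gen_ideal A"
  unfolding gen_ideal_def by (rule CollectI, rule exI[of _ "{}"], auto)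

lemma gi_gen: "g \<in> A \<Longrightarrow> g \<in> gen_ideal A"
  unfolding gen_ideal_def by (rule CollectI, rule exI[of _ "{g}"], rule exI[of _ "\<lambda>_. 1"], auto)

lemma gi_mult: "a \<in> gen_ideal A \<Longrightarrow> q * a \<in> gen_ideal A"
proof -
  assume "a \<in> gen_ideal A"
  then obtain F c where a: "a = (\<Sum>t\<in>F. c t * t)" "finite F" "F \<subseteq> A"
    unfolding gen_ideal_def by blast
  have "q * a = (\<Sum>t\<in>F. (q * c t) * t)" unfolding a by (simp add: sum_distrib_left mult.assoc)
  then show ?thesis using a unfolding gen_ideal_def
    by (intro CollectI exI[of _ F] exI[of _ "\<lambda>t. q * c t"]) auto
qed

lemma gi_add: "a \<in> gen_ideal A \<Longrightarrow> b \<in> gen_ideal A \<Longrightarrow> a + b \<in> gen_ideal A"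
proof -
  assume "a \<in> gen_ideal A" "b \<in> gen_ideal A"
  then obtain F1 c1 F2 c2 where a: "a = (\<Sum>t\<in>F1. c1 t * t)" "finite F1" "F1 \<subseteq> A"
    and b: "b = (\<Sum>t\<in>F2. c2 t * t)" "finite F2" "F2 \<subseteq> A"
    unfolding gen_ideal_def by blast
  define c where "c t = (if t \<in> F1 then c1 t else 0) + (if t \<in> F2 then c2 t else 0)" for t
  have "(\<Sum>t\<in>F1\<union>F2. c t * t) = (\<Sum>t\<in>F1\<union>F2. (if t\<in>F1 then c1 t * t else 0))
      + (\<Sum>t\<in>F1\<union>F2. (if t\<in>F2 then c2 t * t else 0))"
    unfolding sum.distrib[symmetric] by (rule sum.cong) (auto simp: c_def distrib_right)
  also have "\<dots> = a + b"
    using a b by (simp add: sum.inter_restrict[symmetric] Int_absorb1 Int_absorb2 Int_commute)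
  finally show ?thesis using a b unfolding gen_ideal_def
    by (intro CollectI exI[of _ "F1 \<union> F2"] exI[of _ c]) auto
qed

lemma gi_sum: "finite K \<Longrightarrow> (\<And>k. k \<in> K \<Longrightarrow> f k \<in> gen_ideal A) \<Longrightarrow> sum f K \<in> gen_ideal A"
  by (induction K rule: finite_induct) (auto intro: gi_zero gi_add)

lemma gi_diff: "a \<in> gen_ideal A \<Longrightarrow> b \<in> gen_ideal A \<Longrightarrow> a - b \<in> gen_ideal A"
  using gi_add[of a A "(-1) * b"] gi_mult[of b A "-1"] by simp

locale rcl =
  fixes R :: "'a::comm_ring_1 set"
  assumes z: "0 \<in> R" and o: "1 \<in> R" and ad: "a \<in> R \<Longrightarrow> b \<in> R \<Longrightarrow> a + b \<in> R"
    and mu: "a \<in> R \<Longrightarrow> b \<in> R \<Longrightarrow> a * b \<in> R"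
begin

lemma rs_zero: "(\<lambda>i. 0) \<in> rspan R C"
  unfolding rspan_def by (rule CollectI, rule exI[of _ "{}"], auto)

lemma rs_gen: "c \<in> C \<Longrightarrow> c \<in> rspan R C"
  unfolding rspan_def using o
  by (intro CollectI exI[of _ "{c}"] exI[of _ "\<lambda>_. 1"]) auto

lemma rs_smult: "s \<in> R \<Longrightarrow> u \<in> rspan R C \<Longrightarrow> (\<lambda>i. s * u i) \<in> rspan R C"
proof -
  assume s: "s \<in> R" and "u \<in> rspan R C"
  then obtain F a where u: "u = (\<lambda>i. \<Sum>c\<in>F. a c * c i)" "finite F" "F \<subseteq> C" "\<forall>c\<in>F. a c \<in> R"
    unfolding rspan_def by blast
  have "(\<lambda>i. s * u i) = (\<lambda>i. \<Sum>c\<in>F. (s * a c) * c i)" unfolding u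
    by (simp add: sum_distrib_left mult.assoc)
  then show ?thesis using u s mu unfolding rspan_def
    by (intro CollectI exI[of _ F] exI[of _ "\<lambda>t. s * a t"]) auto
qed

lemma rs_add: "u \<in> rspan R C \<Longrightarrow> w \<in> rspan R C \<Longrightarrow> (\<lambda>i. u i + w i) \<in> rspan R C"
proof -
  assume "u \<in> rspan R C" "w \<in> rspan R C"
  then obtain F1 c1 F2 c2 where a: "u = (\<lambda>i. \<Sum>t\<in>F1. c1 t * t i)" "finite F1" "F1 \<subseteq> C" "\<forall>c\<in>F1. c1 c \<in> R"
    and b: "w = (\<lambda>i. \<Sum>t\<in>F2. c2 t * t i)" "finite F2" "F2 \<subseteq> C" "\<forall>c\<in>F2. c2 c \<in> R"
    unfolding rspan_def by blast
  define c where "c t = (if t \<in> F1 then c1 t else 0) + (if t \<in> F2 then c2 t else 0)" for t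
  have "(\<Sum>t\<in>F1\<union>F2. c t * t i) = (\<Sum>t\<in>F1\<union>F2. (if t\<in>F1 then c1 t * t i else 0))
      + (\<Sum>t\<in>F1\<union>F2. (if t\<in>F2 then c2 t * t i else 0))" for i
    unfolding sum.distrib[symmetric] by (rule sum.cong) (auto simp: c_def distrib_right)
  also have "\<dots> i = u i + w i" for i
    using a b by (simp add: sum.inter_restrict[symmetric] Int_absorb1 Int_absorb2 Int_commute)
  finally have e: "(\<lambda>i. u i + w i) = (\<lambda>i. \<Sum>t\<in>F1\<union>F2. c t * t i)" by simp
  have "\<forall>t\<in>F1\<union>F2. c t \<in> R" using a b by (auto simp: c_def intro!: ad z)
  then show ?thesis using a b unfolding e rspan_def
    by (intro CollectI exI[of _ "F1 \<union> F2"] exI[of _ c]) auto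
qed

lemma rs_sum: "finite K \<Longrightarrow> (\<And>k. k \<in> K \<Longrightarrow> f k \<in> rspan R C) \<Longrightarrow> (\<lambda>i. \<Sum>k\<in>K. f k i) \<in> rspan R C"
  by (induction K rule: finite_induct) (auto intro: rs_zero rs_add)

end

lemma rs_mono: "C \<subseteq> D \<Longrightarrow> rspan R C \<subseteq> rspan R D"
  unfolding rspan_def by blast



lemma sw_iff: "p \<in> subring_without x \<longleftrightarrow> (\<forall>m\<in>Poly_Mapping.keys p. Poly_Mapping.lookup m x = 0)"
  unfolding subring_without_def by simp

lemma sw_sub: "Poly_Mapping.keys q \<subseteq> Poly_Mapping.keys p \<Longrightarrow> p \<in> subring_without x \<Longrightarrow> q \<in> subring_without x"
  unfolding sw_iff by blast

lemma sw_single: "Poly_Mapping.lookup m x = 0 \<Longrightarrow> (Poly_Mapping.single m c :: ('v,'k::field) mpoly) \<in> subring_without x"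
  unfolding sw_iff by simp

lemma sw_rcl: "rcl (subring_without x :: ('v,'k::field) mpoly set)"
proof
  show "0 \<in> subring_without x" unfolding sw_iff by simp
  show "1 \<in> subring_without x" unfolding sw_iff by simp
  fix a b :: "('v,'k) mpoly"
  assume a: "a \<in> subring_without x" and b: "b \<in> subring_without x"
  show "a + b \<in> subring_without x" using a b keys_add[of a b] unfolding sw_iff by blast
  show "a * b \<in> subring_without x" unfolding sw_iff
  proof
    fix m assume "m \<in> Poly_Mapping.keys (a * b)"
    then obtain c d where "m = c + d" "c \<in> Poly_Mapping.keys a" "d \<in> Poly_Mapping.keys b"
      using keys_mult[of a b] by blast
    then show "Poly_Mapping.lookup m x = 0" using a b unfolding sw_iff by (simp add: lookup_add)
  qed
qed

lemma sw_sum: "(\<And>k. k \<in> K \<Longrightarrow> f k \<in> subring_without x) \<Longrightarrow> sum f K \<in> subring_without x"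
  by (induction K rule: infinite_finite_induct)
     (auto intro: rcl.z[OF sw_rcl] rcl.ad[OF sw_rcl])

lemma mono_mult: "mono a * mono b = (mono (a + b) :: ('v,'k::field) mpoly)"
  unfolding mono_def by (simp add: mult_single)

lemma single_mono: "Poly_Mapping.single a c * mono b = (Poly_Mapping.single (a + b) c :: ('v,'k::field) mpoly)"
  unfolding mono_def by (simp add: mult_single)

lemma mpoly_expand: "p = (\<Sum>u\<in>Poly_Mapping.keys p. Poly_Mapping.single u (Poly_Mapping.lookup p u))"
  by (rule poly_mapping_eqI) (auto simp: lookup_sum lookup_single when_def in_keys_iff)

lemma mdvd_refl: "mdvd a a" unfolding mdvd_def by simp
lemma mdvd_trans: "mdvd a b \<Longrightarrow> mdvd b c \<Longrightarrow> mdvd a c" unfolding mdvd_def using order_trans by blast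
lemma mdvd_add: "mdvd a (b + a)" unfolding mdvd_def by (simp add: lookup_add)
lemma mdvd_split: "mdvd a b \<Longrightarrow> (b - a) + a = b"
  unfolding mdvd_def by (intro poly_mapping_eqI) (simp add: lookup_add lookup_minus)

lemma keys_mono_mult: "Poly_Mapping.keys (q * (mono g :: ('v,'k::field) mpoly)) \<subseteq> (\<lambda>b. b + g) ` Poly_Mapping.keys q"
  using keys_mult[of q "mono g"] unfolding mono_def by auto

lemma mi_keys:
  assumes "p \<in> gen_ideal ((mono :: _ \<Rightarrow> ('v,'k::field) mpoly) ` G)" "u \<in> Poly_Mapping.keys p"
  shows "\<exists>g\<in>G. mdvd g u"
proof -
  obtain F c where p: "p = (\<Sum>t\<in>F. c t * t)" "F \<subseteq> mono ` G"
    using assms(1) unfolding gen_ideal_def by blast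
  obtain t where t: "t \<in> F" "u \<in> Poly_Mapping.keys (c t * t)"
    using keys_sum[of "\<lambda>t. c t * t" F] assms(2) p(1) by blast
  obtain g where g: "g \<in> G" "t = mono g" using t p by blast
  then obtain b where "u = b + g" using keys_mono_mult[of "c t" g] t by blast
  then show ?thesis using g mdvd_add by blast
qed

lemma mi_single:
  assumes "g \<in> G" "mdvd g u"
  shows "(Poly_Mapping.single u c :: ('v,'k::field) mpoly) \<in> gen_ideal (mono ` G)"
proof -
  have "Poly_Mapping.single u c = Poly_Mapping.single (u - g) c * (mono g :: ('v,'k) mpoly)"
    by (simp add: single_mono mdvd_split assms)
  then show ?thesis using assms by (metis gi_mult gi_gen imageI)
qed

lemma mi_char:
  "(p :: ('v,'k::field) mpoly) \<in> gen_ideal (mono ` G) \<longleftrightarrow> (\<forall>u\<in>Poly_Mapping.keys p. \<exists>g\<in>G. mdvd g u)"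
proof
  assume "p \<in> gen_ideal (mono ` G)" then show "\<forall>u\<in>Poly_Mapping.keys p. \<exists>g\<in>G. mdvd g u"
    using mi_keys by blast
next
  assume h: "\<forall>u\<in>Poly_Mapping.keys p. \<exists>g\<in>G. mdvd g u"
  have "(\<Sum>u\<in>Poly_Mapping.keys p. Poly_Mapping.single u (Poly_Mapping.lookup p u)) \<in> gen_ideal (mono ` G)"
    proof (rule gi_sum)
    fix k assume "k \<in> Poly_Mapping.keys p"
    then obtain g where "g \<in> G" "mdvd g k" using h by blast
    then show "Poly_Mapping.single k (Poly_Mapping.lookup p k) \<in> gen_ideal (mono ` G)" by (rule mi_single)
  qed simp
  then show "p \<in> gen_ideal (mono ` G)" using mpoly_expand[of p] by simp
qed

lemma mi_mono: "(mono u :: ('v,'k::field) mpoly) \<in> gen_ideal (mono ` G) \<longleftrightarrow> (\<exists>g\<in>G. mdvd g u)"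
  unfolding mi_char by (simp add: mono_def)

lemma mi_char2: "(p :: ('v,'k::field) mpoly) \<in> gen_ideal (mono ` G) \<longleftrightarrow>
   (\<forall>u\<in>Poly_Mapping.keys p. (mono u :: ('v,'k) mpoly) \<in> gen_ideal (mono ` G))"
  using mi_char[of p G] mi_mono[of _ G] by blast

lemma mi_single2: "(mono u :: ('v,'k::field) mpoly) \<in> gen_ideal (mono ` G) \<Longrightarrow>
   (Poly_Mapping.single u c :: ('v,'k) mpoly) \<in> gen_ideal (mono ` G)"
  unfolding mi_mono using mi_single by blast

definition deg :: "('v::finite \<Rightarrow>\<^sub>0 nat) \<Rightarrow> nat" where
  "deg m = (\<Sum>v\<in>UNIV. Poly_Mapping.lookup m v)"

lemma deg_less: "mdvd a b \<Longrightarrow> a \<noteq> b \<Longrightarrow> deg a < deg b"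
proof -
  assume "mdvd a b" "a \<noteq> b"
  then obtain v where "Poly_Mapping.lookup a v \<noteq> Poly_Mapping.lookup b v" by (metis poly_mapping_eqI)
  moreover have le: "\<forall>v. Poly_Mapping.lookup a v \<le> Poly_Mapping.lookup b v" using \<open>mdvd a b\<close> unfolding mdvd_def .
  ultimately have lt: "Poly_Mapping.lookup a v < Poly_Mapping.lookup b v" by (simp add: le_neq_implies_less)
  show ?thesis unfolding deg_def
    by (rule sum_strict_mono_ex1[of UNIV]) (use le lt in auto)
qed

lemma mingens_exists:
  fixes A :: "('v::finite, 'k::field) mpoly set"
  shows "m \<in> monos_in A \<Longrightarrow> \<exists>g\<in>mingens A. mdvd g m"
proof (induction "deg m" arbitrary: m rule: less_induct)
  case less
  show ?case
  proof (cases "m \<in> mingens A")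
    case True then show ?thesis using mdvd_refl by blast
  next
    case False
    have "\<not> (\<forall>m'\<in>monos_in A. mdvd m' m \<longrightarrow> m' = m)" using False less.prems unfolding mingens_def by simp
    then obtain m' where m': "m' \<in> monos_in A" "mdvd m' m" "m' \<noteq> m" by blast
    obtain g where "g \<in> mingens A" "mdvd g m'" using less.hyps[OF deg_less[OF m'(2,3)] m'(1)] by blast
    then show ?thesis using mdvd_trans[OF _ m'(2)] by blast
  qed
qed



theorem theorem3p4:
  fixes I :: "('v::finite, 'k::field) mpoly set"
    and x :: 'v and n :: nat and F :: "nat \<Rightarrow> ('v \<Rightarrow>\<^sub>0 nat)"
    and P :: "(nat \<Rightarrow> ('v, 'k) mpoly) set"
  defines "R \<equiv> subring_without x"
  defines "Fp \<equiv> (\<lambda>i. mono (F i) :: ('v, 'k) mpoly)"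
  defines "Ncols \<equiv> {(\<lambda>j. if j = i then mono m else 0) | i m.
                      i < n \<and> m \<in> mingens (colon I (Fp i) \<inter> R)}"
  defines "Syz \<equiv> {r \<in> freemod R n. lincomb n Fp r = 0}"
  assumes sqf: "squarefree_monomial_ideal I"
    and Finj: "inj_on F {..<n}"
    and Fgens: "(\<lambda>i. Poly_Mapping.single x 1 + F i) ` {..<n} = {m \<in> mingens I. Poly_Mapping.lookup m x > 0}"
    and Pfin: "finite P"
    and Psyz: "P \<subseteq> Syz"
    and Pgen: "rspan R P = Syz"
    and Pmin: "\<forall>Q. Q \<subset> P \<longrightarrow> rspan R Q \<noteq> Syz"
  shows "(\<forall>p \<in> colon I (mono (Poly_Mapping.single x 1)).
            \<exists>r \<in> freemod R n. p - lincomb n Fp r \<in> I)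
       \<and> rspan R (Ncols \<union> P) = {r \<in> freemod R n. lincomb n Fp r \<in> I}"
proof -
  obtain G where G: "finite G" "\<forall>m\<in>G. sqfree_mono m" and IG: "I = gen_ideal (mono ` G)"
    using sqf unfolding squarefree_monomial_ideal_def by blast
  interpret rcl R unfolding R_def by (rule sw_rcl)
  define X where "X = (Poly_Mapping.single x 1 :: 'v \<Rightarrow>\<^sub>0 nat)"
  have lX: "Poly_Mapping.lookup X v = (if v = x then 1 else 0)" for v
    unfolding X_def by (simp add: lookup_single when_def)
  have memI: "mono u \<in> I \<longleftrightarrow> (\<exists>g\<in>G. mdvd g u)" for u unfolding IG by (rule mi_mono)
  have monoR: "Poly_Mapping.lookup m x = 0 \<Longrightarrow> Poly_Mapping.single m c \<in> R" for m c
    unfolding R_def by (rule sw_single)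
  have sglI: "mono u \<in> I \<Longrightarrow> Poly_Mapping.single u c \<in> I" for u c
    unfolding IG by (rule mi_single2)
  have mgG: "m \<in> G" if "m \<in> mingens I" for m
  proof -
    have "mono m \<in> I" using that unfolding mingens_def monos_in_def by blast
    then obtain g where g: "g \<in> G" "mdvd g m" using memI by blast
    then have "g \<in> monos_in I" unfolding monos_in_def using memI mdvd_refl by blast
    then have "g = m" using that g(2) unfolding mingens_def by blast
    then show ?thesis using g by simp
  qed
  have Fmi: "X + F i \<in> mingens I" "Poly_Mapping.lookup (X + F i) x > 0" if "i < n" for i
    using that Fgens unfolding X_def by blast+
  have Fx: "Poly_Mapping.lookup (F i) x = 0" if "i < n" for i
  proof -
    have "sqfree_mono (X + F i)" using G(2) mgG Fmi(1)[OF that] by blast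
    then have "Poly_Mapping.lookup (X + F i) x \<le> 1" unfolding sqfree_mono_def by blast
    then show ?thesis using lX[of x] by (simp add: lookup_add)
  qed
  have part1: "\<exists>r \<in> freemod R n. p - lincomb n Fp r \<in> I" if "p \<in> colon I (mono X)" for p
  proof -
    have pX: "p * mono X \<in> I" using that unfolding colon_def by simp
    have "p * mono X = (\<Sum>w\<in>Poly_Mapping.keys p. Poly_Mapping.single w (Poly_Mapping.lookup p w)) * mono X"
      using mpoly_expand[of p] by simp
    also have "\<dots> = (\<Sum>w\<in>Poly_Mapping.keys p. Poly_Mapping.single (w + X) (Poly_Mapping.lookup p w))"
      by (simp add: sum_distrib_right single_mono)
    finally have pXe: "p * mono X = \<dots>" .
    have shift: "Poly_Mapping.lookup (p * mono X) (u + X) = Poly_Mapping.lookup p u" for u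
      unfolding pXe by (simp add: lookup_sum lookup_single when_def in_keys_iff)
    have key: "mono u \<in> I \<or> (\<exists>i<n. mdvd (F i) u \<and> Poly_Mapping.lookup u x = 0)"
      if u: "u \<in> Poly_Mapping.keys p" for u
    proof -
      have "u + X \<in> Poly_Mapping.keys (p * mono X)" using u shift[of u] by (simp add: in_keys_iff)
      then have "mono (u + X) \<in> I" using pX unfolding IG using mi_char2 by blast
      then have "u + X \<in> monos_in I" unfolding monos_in_def by simp
      then obtain g where g: "g \<in> mingens I" "mdvd g (u + X)" using mingens_exists by blast
      have gG: "g \<in> G" using mgG g(1) by blast
      show ?thesis
      proof (cases "Poly_Mapping.lookup g x > 0")
        case True
        then have "g \<in> (\<lambda>i. Poly_Mapping.single x 1 + F i) ` {..<n}" using Fgens g(1) by blast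
        then obtain i where i: "i < n" "g = X + F i" unfolding X_def by blast
        have dv: "Poly_Mapping.lookup X v + Poly_Mapping.lookup (F i) v \<le> Poly_Mapping.lookup u v + Poly_Mapping.lookup X v" for v
          using g(2) unfolding i mdvd_def by (simp add: lookup_add)
        have mF: "mdvd (F i) u" unfolding mdvd_def using dv by simp
        show ?thesis
        proof (cases "Poly_Mapping.lookup u x = 0")
          case True then show ?thesis using mF i(1) by blast
        next
          case False
          have "mdvd g u" unfolding mdvd_def i
          proof
            fix v show "Poly_Mapping.lookup (X + F i) v \<le> Poly_Mapping.lookup u v"
              using dv[of v] False Fx[OF i(1)] by (cases "v = x") (simp_all add: lookup_add lX)
          qed
          then show ?thesis using gG memI by blast
        qed
      next
        case False
        have "mdvd g u" unfolding mdvd_def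
        proof
          fix v show "Poly_Mapping.lookup g v \<le> Poly_Mapping.lookup u v"
            using g(2) False unfolding mdvd_def
            by (cases "v = x") (auto simp: lookup_add lX dest: spec[of _ v])
        qed
        then show ?thesis using gG memI by blast
      qed
    qed
    define B where "B = {u \<in> Poly_Mapping.keys p. mono u \<notin> I}"
    define idx where "idx u = (SOME i. i < n \<and> mdvd (F i) u \<and> Poly_Mapping.lookup u x = 0)" for u
    have idx: "idx u < n \<and> mdvd (F (idx u)) u \<and> Poly_Mapping.lookup u x = 0" if "u \<in> B" for u
    proof -
      have "\<exists>i. i < n \<and> mdvd (F i) u \<and> Poly_Mapping.lookup u x = 0" using key that unfolding B_def by blast
      then show ?thesis unfolding idx_def by (rule someI_ex)
    qed
    have finB: "finite B" unfolding B_def by simp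
    define r where "r i = (if i < n then (\<Sum>u\<in>{u\<in>B. idx u = i}. Poly_Mapping.single (u - F i) (Poly_Mapping.lookup p u)) else 0)" for i
    have rR: "r \<in> freemod R n" unfolding freemod_def
    proof (intro CollectI conjI allI impI)
      fix i assume "i < n"
      show "r i \<in> R" unfolding r_def using \<open>i < n\<close> unfolding R_def
        by (auto intro!: sw_sum sw_single simp: lookup_minus idx)
    qed (simp add: r_def)
    have "lincomb n Fp r = (\<Sum>i<n. \<Sum>u\<in>{u\<in>B. idx u = i}. Poly_Mapping.single u (Poly_Mapping.lookup p u))"
      unfolding lincomb_def Fp_def r_def
      by (rule sum.cong) (auto simp: sum_distrib_right single_mono mdvd_split idx intro!: sum.cong)
    also have "\<dots> = (\<Sum>u\<in>B. Poly_Mapping.single u (Poly_Mapping.lookup p u))"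
      by (rule sum.group) (use finB idx in auto)
    finally have lc: "lincomb n Fp r = \<dots>" .
    have "p = (\<Sum>u\<in>Poly_Mapping.keys p - B. Poly_Mapping.single u (Poly_Mapping.lookup p u))
             + (\<Sum>u\<in>B. Poly_Mapping.single u (Poly_Mapping.lookup p u))"
      apply (subst mpoly_expand[of p])
      apply (rule sum.subset_diff)
       apply (auto simp: B_def)
      done
    then have "p - lincomb n Fp r = (\<Sum>u\<in>Poly_Mapping.keys p - B. Poly_Mapping.single u (Poly_Mapping.lookup p u))"
      unfolding lc by (simp add: algebra_simps)
    also have "\<dots> \<in> I" unfolding IG
      by (rule gi_sum) (auto simp: B_def IG intro: sglI[unfolded IG])
    finally show ?thesis using rR by blast
  qed
  have Rsum: "(\<And>k. k \<in> K \<Longrightarrow> f k \<in> R) \<Longrightarrow> sum f K \<in> R" for K and f :: "'b \<Rightarrow> ('v,'k) mpoly"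
    unfolding R_def by (rule sw_sum)
  have xR: "Poly_Mapping.lookup u x = 0" if "q \<in> R" "u \<in> Poly_Mapping.keys q" for q u
    using that unfolding R_def sw_iff by blast
  have part2a: "rspan R (Ncols \<union> P) \<subseteq> {r \<in> freemod R n. lincomb n Fp r \<in> I}"
  proof
    fix w assume "w \<in> rspan R (Ncols \<union> P)"
    then obtain C a where w: "w = (\<lambda>i. \<Sum>c\<in>C. a c * c i)" "finite C" "C \<subseteq> Ncols \<union> P" "\<forall>c\<in>C. a c \<in> R"
      unfolding rspan_def by blast
    have cR: "c \<in> freemod R n \<and> lincomb n Fp c \<in> I" if cN: "c \<in> Ncols \<union> P" for c
    proof (cases "c \<in> P")
      case True then have "c \<in> Syz" using Psyz by blast
      then show ?thesis using gi_zero[of "mono ` G"] unfolding Syz_def IG by simp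
    next
      case False
      then obtain i m where c: "c = (\<lambda>j. if j = i then mono m else 0)" "i < n"
        "m \<in> mingens (colon I (Fp i) \<inter> R)" using cN unfolding Ncols_def by blast
      then have "mono m \<in> colon I (Fp i) \<inter> R" unfolding mingens_def monos_in_def by blast
      then have mR: "mono m \<in> R" and mI: "mono m * Fp i \<in> I" unfolding colon_def by auto
      have "lincomb n Fp c = (\<Sum>j<n. if j = i then mono m * Fp j else 0)"
        unfolding lincomb_def c(1) by (rule sum.cong) auto
      also have "\<dots> = mono m * Fp i" using c(2) by simp
      finally have "lincomb n Fp c = mono m * Fp i" .
      moreover have "c \<in> freemod R n" unfolding freemod_def c(1) using c(2) mR z by auto
      ultimately show ?thesis using mI by simp
    qed
    show "w \<in> {r \<in> freemod R n. lincomb n Fp r \<in> I}"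
    proof (intro CollectI conjI)
      show "w \<in> freemod R n" unfolding freemod_def
      proof (intro CollectI conjI allI impI)
        fix i assume "i < n"
        show "w i \<in> R" unfolding w(1)
        proof (rule Rsum)
          fix c assume "c \<in> C"
          then have "c \<in> freemod R n" "a c \<in> R" using cR w by auto
          then show "a c * c i \<in> R" using \<open>i < n\<close> mu unfolding freemod_def by blast
        qed
      next
        fix i assume "n \<le> i"
        have zc: "c i = 0" if "c \<in> C" for c using cR[of c] w(3) that \<open>n \<le> i\<close> unfolding freemod_def by blast
        show "w i = 0" unfolding w(1)
        proof (intro sum.neutral ballI)
          fix c assume "c \<in> C" then show "a c * c i = 0" using zc[of c] by simp
        qed
      qed
      have "lincomb n Fp w = (\<Sum>c\<in>C. a c * lincomb n Fp c)"
        unfolding lincomb_def w(1) by (simp add: sum_distrib_right sum_distrib_left mult.assoc sum.swap[of _ C])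
      also have "\<dots> \<in> I" unfolding IG
        by (rule gi_sum) (use w(2) in simp, use cR w in \<open>auto intro: gi_mult simp: IG\<close>)
      finally show "lincomb n Fp w \<in> I" .
    qed
  qed
  have part2b: "r \<in> rspan R (Ncols \<union> P)" if r: "r \<in> freemod R n" "lincomb n Fp r \<in> I" for r
  proof -
    define good where "good i u \<longleftrightarrow> mono (u + F i) \<in> I" for i u
    define r1 where "r1 i = (if i < n then (\<Sum>u\<in>{u\<in>Poly_Mapping.keys (r i). \<not> good i u}. Poly_Mapping.single u (Poly_Mapping.lookup (r i) u)) else 0)" for i
    define r2 where "r2 i = (if i < n then (\<Sum>u\<in>{u\<in>Poly_Mapping.keys (r i). good i u}. Poly_Mapping.single u (Poly_Mapping.lookup (r i) u)) else 0)" for i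
    have rsplit: "r i = r1 i + r2 i" for i
    proof (cases "i < n")
      case True
      have e: "Poly_Mapping.keys (r i) - {u\<in>Poly_Mapping.keys (r i). good i u} = {u\<in>Poly_Mapping.keys (r i). \<not> good i u}" by auto
      have "r i = (\<Sum>u\<in>Poly_Mapping.keys (r i). Poly_Mapping.single u (Poly_Mapping.lookup (r i) u))"
        by (rule mpoly_expand)
      also have "\<dots> = r1 i + r2 i" unfolding r1_def r2_def using True
        by (subst sum.subset_diff[of "{u\<in>Poly_Mapping.keys (r i). good i u}"]) (auto simp only: e, simp_all)
      finally show ?thesis .
    next
      case False then show ?thesis using r(1) unfolding freemod_def r1_def r2_def by simp
    qed
    have r2I: "r2 i * Fp i \<in> I" for i
    proof (cases "i < n")
      case True
      have "r2 i * Fp i = (\<Sum>u\<in>{u\<in>Poly_Mapping.keys (r i). good i u}. Poly_Mapping.single (u + F i) (Poly_Mapping.lookup (r i) u))"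
        unfolding r2_def Fp_def using True by (simp add: sum_distrib_right single_mono)
      also have "\<dots> \<in> I" unfolding IG
        by (rule gi_sum) (auto simp: good_def IG intro: sglI[unfolded IG])
      finally show ?thesis .
    next
      case False then show ?thesis unfolding r2_def using gi_zero[of "mono ` G"] IG by simp
    qed
    have l2: "lincomb n Fp r2 \<in> I" unfolding lincomb_def IG by (rule gi_sum) (use r2I IG in auto)
    have "lincomb n Fp r = lincomb n Fp r1 + lincomb n Fp r2"
      unfolding lincomb_def by (simp add: rsplit distrib_right sum.distrib)
    then have "lincomb n Fp r1 = lincomb n Fp r - lincomb n Fp r2" by simp
    then have l1I: "lincomb n Fp r1 \<in> I" using r(2) l2 gi_diff unfolding IG by metis
    have l10: "lincomb n Fp r1 = 0"
    proof (rule ccontr)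
      assume "lincomb n Fp r1 \<noteq> 0"
      then obtain w where wk: "w \<in> Poly_Mapping.keys (lincomb n Fp r1)" by (metis keys_eq_empty all_not_in_conv)
      then have wI: "mono w \<in> I" using l1I unfolding IG using mi_char2 by blast
      obtain i where i: "i < n" "w \<in> Poly_Mapping.keys (r1 i * Fp i)"
        using wk keys_sum[of "\<lambda>i. r1 i * Fp i" "{..<n}"] unfolding lincomb_def by blast
      have "r1 i * Fp i = (\<Sum>u\<in>{u\<in>Poly_Mapping.keys (r i). \<not> good i u}. Poly_Mapping.single (u + F i) (Poly_Mapping.lookup (r i) u))"
        unfolding r1_def Fp_def using i(1) by (simp add: sum_distrib_right single_mono)
      then have wk2: "w \<in> Poly_Mapping.keys (\<Sum>u\<in>{u\<in>Poly_Mapping.keys (r i). \<not> good i u}. Poly_Mapping.single (u + F i) (Poly_Mapping.lookup (r i) u) :: ('v,'k) mpoly)"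
        using i(2) by simp
      obtain u where "u \<in> {u\<in>Poly_Mapping.keys (r i). \<not> good i u}"
          "w \<in> Poly_Mapping.keys (Poly_Mapping.single (u + F i) (Poly_Mapping.lookup (r i) u) :: ('v,'k) mpoly)"
        using subsetD[OF keys_sum[of "\<lambda>u. Poly_Mapping.single (u + F i) (Poly_Mapping.lookup (r i) u) :: ('v,'k) mpoly"] wk2] by blast
      then have "w = u + F i" "\<not> good i u" by (auto split: if_splits)
      then show False using wI unfolding good_def by simp
    qed
    have r1F: "r1 \<in> freemod R n" unfolding freemod_def
    proof (intro CollectI conjI allI impI)
      fix i assume i: "i < n"
      then have "r i \<in> R" using r(1) unfolding freemod_def by blast
      then show "r1 i \<in> R" unfolding r1_def using i
        by (auto intro!: Rsum monoR xR)
    qed (simp add: r1_def)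
    have r1S: "r1 \<in> rspan R (Ncols \<union> P)"
      using r1F l10 Pgen rs_mono[of P "Ncols \<union> P" R] unfolding Syz_def by blast
    define vec where "vec i u = (\<lambda>j. if j = i then Poly_Mapping.single u (Poly_Mapping.lookup (r i) u) else (0::('v,'k) mpoly))" for i u
    have vecS: "vec i u \<in> rspan R (Ncols \<union> P)" if i: "i < n" and u: "u \<in> Poly_Mapping.keys (r i)" "good i u" for i u
    proof -
      have "r i \<in> R" using r(1) i unfolding freemod_def by blast
      then have ux: "Poly_Mapping.lookup u x = 0" using u xR by blast
      have "mono u \<in> R" unfolding mono_def by (rule monoR[OF ux])
      moreover have "mono u * Fp i \<in> I" using u(2) unfolding good_def Fp_def by (simp add: mono_mult)
      ultimately have "u \<in> monos_in (colon I (Fp i) \<inter> R)" unfolding monos_in_def colon_def by simp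
      then obtain g where g: "g \<in> mingens (colon I (Fp i) \<inter> R)" "mdvd g u" using mingens_exists by blast
      define col where "col = (\<lambda>j. if j = i then mono g else (0::('v,'k) mpoly))"
      have "col \<in> Ncols" unfolding Ncols_def col_def using g(1) i by blast
      then have cS: "col \<in> rspan R (Ncols \<union> P)" using rs_gen by blast
      have sR: "Poly_Mapping.single (u - g) (Poly_Mapping.lookup (r i) u) \<in> R"
        by (rule monoR) (simp add: lookup_minus ux)
      have "vec i u = (\<lambda>j. Poly_Mapping.single (u - g) (Poly_Mapping.lookup (r i) u) * col j)"
        unfolding vec_def col_def by (auto simp: single_mono mdvd_split g(2))
      then show ?thesis using rs_smult[OF sR cS] by simp
    qed
    have r2e: "r2 = (\<lambda>j. \<Sum>i<n. (\<lambda>j. \<Sum>u\<in>{u\<in>Poly_Mapping.keys (r i). good i u}. vec i u j) j)"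
    proof
      fix j
      have h: "(\<Sum>u\<in>{u\<in>Poly_Mapping.keys (r i). good i u}. vec i u j) =
          (if j = i then (\<Sum>u\<in>{u\<in>Poly_Mapping.keys (r i). good i u}. Poly_Mapping.single u (Poly_Mapping.lookup (r i) u)) else 0)" for i
        unfolding vec_def by (cases "j = i") simp_all
      show "r2 j = (\<Sum>i<n. (\<lambda>j. \<Sum>u\<in>{u\<in>Poly_Mapping.keys (r i). good i u}. vec i u j) j)"
        unfolding h r2_def by simp
    qed
    have r2S: "r2 \<in> rspan R (Ncols \<union> P)" unfolding r2e
      by (rule rs_sum) (auto intro!: rs_sum vecS)
    have "r = (\<lambda>j. r1 j + r2 j)" using rsplit by auto
    then show ?thesis using rs_add[OF r1S r2S] by simp
  qed
  show ?thesis using part1 part2a part2b unfolding X_def by blast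
qed

end
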